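(* Let $r\geq 2$ be an integer and $m=rn$. Let $G=(A,B,E)$ be sampled from the Erdős–Rényi random bipartite graph distribution $\mathcal{G}(n,m,p)$ with $p\geq\frac{64\log m}{n}$. Then, with high probability, for every subgraph $H=(A,B,E')$ of $G$ (with $E'\subseteq E$) of maximum degree at most $16\log m$, the graph $G-H=(A,B,E\setminus E')$ contains a perfect $r$-matching.
   Context: $\mathcal{G}(a,b,p)$ denotes the random bipartite graph with left vertex set $A$ of size $a$, right vertex set $B$ of size $b$, where each pair $(x,y)\in A\times B$ is an edge independently with probability $p$. An $r$-matching of a bipartite graph is a subgraph in which every left vertex has degree at most $r$ and every right vertex has degree at most 1; it is perfect if every left vertex has degree exactly $r$ and every right vertex has degree exactly 1. $\log$ is natural. "With high probability" means with probability tending to 1 as $n\to\infty$. *)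

theory Defs
  imports "HOL-Probability.Probability"
begin

definition bip_graph_pmf :: "nat \<Rightarrow> nat \<Rightarrow> real \<Rightarrow> (nat \<times> nat) set pmf" where
  "bip_graph_pmf a b p =
     map_pmf (\<lambda>f. {e \<in> {0..<a} \<times> {0..<b}. f e})
       (Pi_pmf ({0..<a} \<times> {0..<b}) False (\<lambda>_. bernoulli_pmf p))"

definition perfect_r_matching ::
  "nat \<Rightarrow> nat set \<Rightarrow> nat set \<Rightarrow> (nat \<times> nat) set \<Rightarrow> (nat \<times> nat) set \<Rightarrow> bool" where
  "perfect_r_matching r A B E M \<longleftrightarrow>
     M \<subseteq> E \<and> M \<subseteq> A \<times> B \<and>
     (\<forall>x\<in>A. card {y. (x, y) \<in> M} = r) \<and>
     (\<forall>y\<in>B. card {x. (x, y) \<in> M} = 1)"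

definition has_perfect_r_matching ::
  "nat \<Rightarrow> nat set \<Rightarrow> nat set \<Rightarrow> (nat \<times> nat) set \<Rightarrow> bool" where
  "has_perfect_r_matching r A B E \<longleftrightarrow> (\<exists>M. perfect_r_matching r A B E M)"

definition max_degree_le :: "nat set \<Rightarrow> nat set \<Rightarrow> (nat \<times> nat) set \<Rightarrow> real \<Rightarrow> bool" where
  "max_degree_le A B H d \<longleftrightarrow>
     (\<forall>x\<in>A. real (card {y. (x, y) \<in> H}) \<le> d) \<and>
     (\<forall>y\<in>B. real (card {x. (x, y) \<in> H}) \<le> d)"

end

theory Submission
  imports Defs
begin

lemma hall:
  fixes I :: "'i set" and A :: "'i \<Rightarrow> 'b set"
  assumes "finite I" "\<forall>i\<in>I. finite (A i)" "\<forall>J\<subseteq>I. card J \<le> card (\<Union>(A ` J))"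
  shows "\<exists>f. inj_on f I \<and> (\<forall>i\<in>I. f i \<in> A i)"
  using assms
proof (induction "card I" arbitrary: I A rule: less_induct)
  case less
  show ?case
  proof (cases "I = {}")
    case True then show ?thesis by auto
  next
    case nonempty: False
    show ?thesis
    proof (cases "\<exists>J. J \<subseteq> I \<and> J \<noteq> {} \<and> J \<noteq> I \<and> card J = card (\<Union>(A ` J))")
      case True
      then obtain J where J: "J \<subseteq> I" "J \<noteq> {}" "J \<noteq> I" "card J = card (\<Union>(A ` J))" by blast
      have finJ: "finite J" using J(1) less.prems(1) finite_subset by blast
      have cJ: "card J < card I" using J less.prems(1) by (meson psubsetI psubset_card_mono)
      have "\<exists>g. inj_on g J \<and> (\<forall>i\<in>J. g i \<in> A i)"
      proof (rule less.hyps[OF cJ finJ])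
        show "\<forall>i\<in>J. finite (A i)" using less.prems(2) J(1) by auto
        show "\<forall>Ja\<subseteq>J. card Ja \<le> card (\<Union> (A ` Ja))" using less.prems(3) J(1) by auto
      qed
      then obtain g where g: "inj_on g J" "\<forall>i\<in>J. g i \<in> A i" by blast
      define U where "U = \<Union>(A ` J)"
      have finU: "finite U" unfolding U_def using finJ less.prems(2) J(1) by auto
      have cIJ: "card (I - J) < card I"
        using J less.prems(1) by (metis Diff_subset card_Diff_subset card_gt_0_iff diff_less finite_subset finJ card_mono psubsetI subset_empty card_seteq)
      have "\<exists>h. inj_on h (I - J) \<and> (\<forall>i\<in>I - J. h i \<in> A i - U)"
      proof (rule less.hyps[OF cIJ])
        show "finite (I - J)" using less.prems(1) by auto
        show "\<forall>i\<in>I - J. finite (A i - U)" using less.prems(2) by auto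
        show "\<forall>K\<subseteq>I - J. card K \<le> card (\<Union>i\<in>K. A i - U)"
        proof (intro allI impI)
          fix K assume K: "K \<subseteq> I - J"
          have finK: "finite K" using K less.prems(1) finite_subset by blast
          have eq: "\<Union>(A ` (K \<union> J)) = (\<Union>i\<in>K. A i - U) \<union> U" unfolding U_def by auto
          have fin1: "finite (\<Union>i\<in>K. A i - U)" using finK K less.prems(2) by auto
          have "card K + card J = card (K \<union> J)"
            using K finK finJ by (subst card_Un_disjoint) auto
          also have "\<dots> \<le> card (\<Union>(A ` (K \<union> J)))"
            using less.prems(3) K J(1) by (metis Diff_subset Un_subset_iff order_trans)
          also have "\<dots> = card (\<Union>i\<in>K. A i - U) + card U"
            unfolding eq using fin1 finU by (subst card_Un_disjoint) auto
          finally show "card K \<le> card (\<Union>i\<in>K. A i - U)" using J(4) U_def by simp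
        qed
      qed
      then obtain h where h: "inj_on h (I - J)" "\<forall>i\<in>I - J. h i \<in> A i - U" by blast
      define f where "f i = (if i \<in> J then g i else h i)" for i
      have "inj_on f I"
      proof (rule inj_onI)
        fix x y assume xy: "x \<in> I" "y \<in> I" "f x = f y"
        show "x = y"
        proof (cases "x \<in> J"; cases "y \<in> J")
          assume "x \<in> J" "y \<in> J" then show ?thesis using xy g(1) f_def by (auto dest: inj_onD)
        next
          assume "x \<notin> J" "y \<notin> J" then show ?thesis using xy h(1) f_def by (auto dest: inj_onD)
        next
          assume a: "x \<in> J" "y \<notin> J"
          then have "f x \<in> U" "f y \<notin> U" using g h xy f_def U_def by auto
          then show ?thesis using xy by simp
        next
          assume a: "x \<notin> J" "y \<in> J"
          have "f y \<in> U" using a g xy f_def U_def by auto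
          moreover have "f x \<notin> U" using a h xy(1) f_def by auto
          ultimately show ?thesis using xy by simp
        qed
      qed
      moreover have "\<forall>i\<in>I. f i \<in> A i" using g h f_def by auto
      ultimately show ?thesis by blast
    next
      case False
      then have strict: "\<And>J. J \<subseteq> I \<Longrightarrow> J \<noteq> {} \<Longrightarrow> J \<noteq> I \<Longrightarrow> card J < card (\<Union>(A ` J))"
        using less.prems(3) by (metis le_neq_implies_less)
      obtain i0 where i0: "i0 \<in> I" using nonempty by blast
      have "card {i0} \<le> card (A i0)" using less.prems(3) i0 by (metis ccpo_Sup_singleton empty_subsetI image_empty image_insert insert_subset)
      then have "A i0 \<noteq> {}" by auto
      then obtain y where y: "y \<in> A i0" by blast
      have cI: "card (I - {i0}) < card I" using i0 less.prems(1) by (meson card_Diff1_less)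
      have "\<exists>h. inj_on h (I - {i0}) \<and> (\<forall>i\<in>I - {i0}. h i \<in> A i - {y})"
      proof (rule less.hyps[OF cI])
        show "finite (I - {i0})" using less.prems(1) by auto
        show "\<forall>i\<in>I - {i0}. finite (A i - {y})" using less.prems(2) by auto
        show "\<forall>K\<subseteq>I - {i0}. card K \<le> card (\<Union>i\<in>K. A i - {y})"
        proof (intro allI impI)
          fix K assume K: "K \<subseteq> I - {i0}"
          show "card K \<le> card (\<Union>i\<in>K. A i - {y})"
          proof (cases "K = {}")
            case True then show ?thesis by simp
          next
            case False
            have finK: "finite K" using K less.prems(1) finite_subset by blast
            have fin: "finite (\<Union>(A ` K))" using finK K less.prems(2) by auto
            have "K \<noteq> I" using K i0 by auto
            then have "card K < card (\<Union>(A ` K))" using strict K False by auto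
            moreover have "(\<Union>i\<in>K. A i - {y}) = \<Union>(A ` K) - {y}" by auto
            moreover have "card (\<Union>(A ` K)) \<le> card (\<Union>(A ` K) - {y}) + 1"
              using fin by (metis card_Diff_singleton_if le_refl card_0_eq diff_Suc_1 Suc_eq_plus1 add_leE card_Suc_Diff1 le_add1)
            ultimately show ?thesis by simp
          qed
        qed
      qed
      then obtain h where h: "inj_on h (I - {i0})" "\<forall>i\<in>I - {i0}. h i \<in> A i - {y}" by blast
      define f where "f i = (if i = i0 then y else h i)" for i
      have "inj_on f I"
        using h unfolding f_def inj_on_def by (metis DiffD2 DiffI singletonD singletonI)
      moreover have "\<forall>i\<in>I. f i \<in> A i" using h y f_def by auto
      ultimately show ?thesis by blast
    qed
  qed
qed

lemma hall_r:
  fixes A B :: "nat set" and F :: "(nat \<times> nat) set"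
  assumes finA: "finite A" and finB: "finite B" and cB: "card B = r * card A" and FAB: "F \<subseteq> A \<times> B"
    and hc: "\<forall>S\<subseteq>A. r * card S \<le> card {y. \<exists>x\<in>S. (x, y) \<in> F}"
  shows "has_perfect_r_matching r A B F"
proof -
  define I where "I = A \<times> {..<r}"
  define N where "N i = {y. (fst i, y) \<in> F}" for i :: "nat \<times> nat"
  have finI: "finite I" using finA I_def by auto
  have finN: "\<forall>i\<in>I. finite (N i)"
  proof
    fix i assume "i \<in> I"
    have "N i \<subseteq> B" using FAB N_def by auto
    then show "finite (N i)" using finB finite_subset by blast
  qed
  have "\<forall>J\<subseteq>I. card J \<le> card (\<Union>(N ` J))"
  proof (intro allI impI)
    fix J assume J: "J \<subseteq> I"
    define P where "P = fst ` J"
    have PA: "P \<subseteq> A" using J I_def P_def by auto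
    have finP: "finite P" using PA finA finite_subset by blast
    have "J \<subseteq> P \<times> {..<r}" using J I_def P_def by force
    then have "card J \<le> card (P \<times> {..<r})" using finP by (intro card_mono) auto
    also have "\<dots> = r * card P" by (simp add: card_cartesian_product)
    also have "\<dots> \<le> card {y. \<exists>x\<in>P. (x, y) \<in> F}" using hc PA by auto
    also have "{y. \<exists>x\<in>P. (x, y) \<in> F} = \<Union>(N ` J)" unfolding P_def N_def by force
    finally show "card J \<le> card (\<Union>(N ` J))" .
  qed
  then obtain f where f: "inj_on f I" "\<forall>i\<in>I. f i \<in> N i"
    using hall[OF finI finN] by blast
  have fB: "f ` I \<subseteq> B" using f(2) FAB N_def by auto
  have "card (f ` I) = card B" using f(1) cB I_def by (simp add: card_image card_cartesian_product mult.commute)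
  then have fIB: "f ` I = B" using fB finB by (simp add: card_subset_eq)
  define M where "M = (\<lambda>i. (fst i, f i)) ` I"
  have "perfect_r_matching r A B F M"
    unfolding perfect_r_matching_def
  proof (intro conjI ballI)
    show "M \<subseteq> F" using f(2) N_def M_def by auto
    show "M \<subseteq> A \<times> B" using fB M_def I_def by auto
  next
    fix x assume x: "x \<in> A"
    have "{y. (x, y) \<in> M} = f ` ({x} \<times> {..<r})" unfolding M_def I_def using x by force
    moreover have "inj_on f ({x} \<times> {..<r})" using x by (intro inj_on_subset[OF f(1)]) (auto simp: I_def)
    ultimately show "card {y. (x, y) \<in> M} = r" by (simp add: card_image card_cartesian_product)
  next
    fix y assume y: "y \<in> B"
    then obtain i where i: "i \<in> I" "f i = y" using fIB by blast
    have "{x. (x, y) \<in> M} = {fst i}"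
    proof
      show "{x. (x, y) \<in> M} \<subseteq> {fst i}"
      proof
        fix x assume "x \<in> {x. (x, y) \<in> M}"
        then obtain j where j: "j \<in> I" "x = fst j" "f j = y" unfolding M_def by auto
        then have "j = i" using f(1) i by (metis inj_onD)
        then show "x \<in> {fst i}" using j by simp
      qed
      show "{fst i} \<subseteq> {x. (x, y) \<in> M}" using i M_def by auto
    qed
    then show "card {x. (x, y) \<in> M} = 1" by simp
  qed
  then show ?thesis unfolding has_perfect_r_matching_def by blast
qed

lemma fin_row: "finite H \<Longrightarrow> finite {y. (x, y) \<in> H}"
  by (rule finite_subset[of _ "snd ` H"]) force+

lemma fin_col: "finite H \<Longrightarrow> finite {x. (x, y) \<in> H}"
  by (rule finite_subset[of _ "fst ` H"]) force+

lemma deg_bound: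
  fixes S :: "nat set" and H :: "(nat \<times> nat) set"
  assumes "finite S" "finite H" "\<forall>x\<in>S. real (card {y. (x, y) \<in> H}) \<le> d"
  shows "real (card (H \<inter> S \<times> T)) \<le> d * card S"
proof -
  have "H \<inter> S \<times> T \<subseteq> (\<Union>x\<in>S. {x} \<times> {y. (x, y) \<in> H})" by auto
  then have "card (H \<inter> S \<times> T) \<le> card (\<Union>x\<in>S. {x} \<times> {y. (x, y) \<in> H})"
    by (intro card_mono) (use assms(1,2) fin_row fin_col in \<open>auto intro!: finite_cartesian_product\<close>)
  also have "\<dots> \<le> (\<Sum>x\<in>S. card ({x} \<times> {y. (x, y) \<in> H}))" by (rule card_UN_le[OF assms(1)])
  also have "\<dots> = (\<Sum>x\<in>S. card {y. (x, y) \<in> H})" by (simp add: card_cartesian_product)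
  finally have "real (card (H \<inter> S \<times> T)) \<le> (\<Sum>x\<in>S. real (card {y. (x, y) \<in> H}))"
    by (metis of_nat_le_iff of_nat_sum)
  also have "\<dots> \<le> (\<Sum>x\<in>S. d)" using assms(3) by (intro sum_mono) auto
  finally show ?thesis by (simp add: mult.commute)
qed

lemma deg_bound2:
  fixes T :: "nat set" and H :: "(nat \<times> nat) set"
  assumes "finite T" "finite H" "\<forall>y\<in>T. real (card {x. (x, y) \<in> H}) \<le> d"
  shows "real (card (H \<inter> S \<times> T)) \<le> d * card T"
proof -
  have "H \<inter> S \<times> T \<subseteq> (\<Union>y\<in>T. {x. (x, y) \<in> H} \<times> {y})" by auto
  then have "card (H \<inter> S \<times> T) \<le> card (\<Union>y\<in>T. {x. (x, y) \<in> H} \<times> {y})"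
    by (intro card_mono) (use assms(1,2) fin_row fin_col in \<open>auto intro!: finite_cartesian_product\<close>)
  also have "\<dots> \<le> (\<Sum>y\<in>T. card ({x. (x, y) \<in> H} \<times> {y}))" by (rule card_UN_le[OF assms(1)])
  also have "\<dots> = (\<Sum>y\<in>T. card {x. (x, y) \<in> H})" by (simp add: card_cartesian_product)
  finally have "real (card (H \<inter> S \<times> T)) \<le> (\<Sum>y\<in>T. real (card {x. (x, y) \<in> H}))"
    by (metis of_nat_le_iff of_nat_sum)
  also have "\<dots> \<le> (\<Sum>y\<in>T. d)" using assms(3) by (intro sum_mono) auto
  finally show ?thesis by (simp add: mult.commute)
qed

lemma key:
  fixes A B :: "nat set" and E H :: "(nat \<times> nat) set"
  assumes finA: "finite A" and finB: "finite B" and cB: "card B = r * card A"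
    and EAB: "E \<subseteq> A \<times> B" and HE: "H \<subseteq> E" and md: "max_degree_le A B H d"
    and nm: "\<not> has_perfect_r_matching r A B (E - H)"
  shows "\<exists>S T. S \<subseteq> A \<and> T \<subseteq> B \<and> S \<noteq> {} \<and> card B < card T + r * card S \<and>
           real (card (E \<inter> S \<times> T)) \<le> d * card S \<and> real (card (E \<inter> S \<times> T)) \<le> d * card T"
proof -
  have "E - H \<subseteq> A \<times> B" using EAB by auto
  then have "\<not> (\<forall>S\<subseteq>A. r * card S \<le> card {y. \<exists>x\<in>S. (x, y) \<in> E - H})"
    using hall_r[OF finA finB cB, of "E - H"] nm by blast
  then obtain S where S: "S \<subseteq> A" "card {y. \<exists>x\<in>S. (x, y) \<in> E - H} < r * card S"
    by (auto simp: not_le)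
  define N where "N = {y. \<exists>x\<in>S. (x, y) \<in> E - H}"
  define T where "T = B - N"
  have NB: "N \<subseteq> B" using EAB N_def by auto
  have finN: "finite N" using NB finB finite_subset by blast
  have "card T = card B - card N" unfolding T_def using NB finN by (simp add: card_Diff_subset)
  moreover have "card N \<le> card B" using NB finB card_mono by blast
  ultimately have c1: "card B < card T + r * card S" using S(2) N_def by simp
  have Sne: "S \<noteq> {}" using S(2) by auto
  have finH: "finite H" using HE EAB finA finB finite_subset by (metis finite_SigmaI)
  have finS: "finite S" using S(1) finA finite_subset by blast
  have finT: "finite T" using T_def finB by auto
  have sub: "E \<inter> S \<times> T \<subseteq> H \<inter> S \<times> T" unfolding T_def N_def by auto
  have le: "card (E \<inter> S \<times> T) \<le> card (H \<inter> S \<times> T)" using sub finH by (intro card_mono) auto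
  have "real (card (H \<inter> S \<times> T)) \<le> d * card S"
    using deg_bound[OF finS finH] md S(1) unfolding max_degree_le_def by auto
  moreover have "real (card (H \<inter> S \<times> T)) \<le> d * card T"
    using deg_bound2[OF finT finH] md unfolding max_degree_le_def T_def by auto
  ultimately show ?thesis using le c1 Sne S(1) T_def
    by (intro exI[of _ S] exI[of _ T]) (auto intro: order_trans[OF of_nat_mono[OF le]])
qed

lemma prob_few_edges:
  fixes D :: "(nat \<times> nat) set" and a p :: real
  assumes DG: "D \<subseteq> {0..<n} \<times> {0..<m}" and p: "0 \<le> p" "p \<le> 1"
  shows "measure_pmf.prob (bip_graph_pmf n m p) {E. real (card (E \<inter> D)) \<le> a}
           \<le> 2 powr a * (1 - p / 2) ^ card D"
proof -
  define G where "G = {0..<n} \<times> {0..<m}"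
  define Q where "Q = Pi_pmf G False (\<lambda>_. bernoulli_pmf p)"
  define Y where "Y = {f. real (card ({e \<in> G. f e} \<inter> D)) \<le> a}"
  define g where "g f = 2 powr a * (\<Prod>e\<in>G. if e \<in> D \<and> f e then 1/2 else (1::real))" for f :: "nat \<times> nat \<Rightarrow> bool"
  have finG: "finite G" unfolding G_def by auto
  have finD: "finite D" using DG finite_subset by blast
  have eq1: "measure_pmf.prob (bip_graph_pmf n m p) {E. real (card (E \<inter> D)) \<le> a} = measure_pmf.prob Q Y"
    unfolding bip_graph_pmf_def Q_def Y_def G_def by (simp add: vimage_def)
  have finQ: "finite (set_pmf Q)" unfolding Q_def using finG by (simp add: set_Pi_pmf finite_PiE_dflt)
  have "measure_pmf.prob Q Y = measure_pmf.expectation Q (indicator Y)" by simp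
  also have "\<dots> \<le> measure_pmf.expectation Q g"
  proof (rule integral_mono)
    show "integrable (measure_pmf Q) (indicator Y :: _ \<Rightarrow> real)" by (rule integrable_measure_pmf_finite[OF finQ])
    show "integrable (measure_pmf Q) g" by (rule integrable_measure_pmf_finite[OF finQ])
    fix f assume "f \<in> space (measure_pmf Q)"
    show "indicator Y f \<le> g f"
    proof (cases "f \<in> Y")
      case True
      define c where "c = card ({e \<in> G. f e} \<inter> D)"
      have ca: "real c \<le> a" using True Y_def c_def by auto
      have "(\<Prod>e\<in>G. if e \<in> D \<and> f e then 1/2 else (1::real)) = (1/2) ^ card (G \<inter> {e. e \<in> D \<and> f e})"
        using finG by (simp add: prod.If_cases)
      also have "G \<inter> {e. e \<in> D \<and> f e} = {e \<in> G. f e} \<inter> D" by auto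
      finally have "g f = 2 powr a * (1/2) ^ c" unfolding g_def c_def by simp
      also have "\<dots> = 2 powr (a - c)" by (simp add: powr_diff powr_realpow power_divide)
      finally have gf: "g f = 2 powr (a - c)" .
      have "1 \<le> 2 powr (a - c)" using ca by (intro ge_one_powr_ge_zero) auto
      then show ?thesis using True gf by simp
    next
      case False
      have "g f \<ge> 0" unfolding g_def by (intro mult_nonneg_nonneg prod_nonneg) auto
      then show ?thesis using False by simp
    qed
  qed
  also have "measure_pmf.expectation Q g =
      2 powr a * measure_pmf.expectation Q (\<lambda>f. \<Prod>e\<in>G. (\<lambda>e v. if e \<in> D \<and> v then 1/2 else (1::real)) e (f e))"
    unfolding g_def by simp
  also have "measure_pmf.expectation Q (\<lambda>f. \<Prod>e\<in>G. (\<lambda>e v. if e \<in> D \<and> v then 1/2 else (1::real)) e (f e))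
      = (\<Prod>e\<in>G. measure_pmf.expectation (bernoulli_pmf p) (\<lambda>v. if e \<in> D \<and> v then 1/2 else (1::real)))"
    unfolding Q_def by (rule expectation_prod_Pi_pmf[OF finG]) (auto intro: integrable_measure_pmf_finite)
  also have "\<dots> = (\<Prod>e\<in>G. if e \<in> D then 1 - p/2 else 1)"
    using p by (intro prod.cong) auto
  also have "\<dots> = (1 - p/2) ^ card D"
  proof -
    have "G \<inter> {e. e \<in> D} = D" using DG G_def by auto
    then show ?thesis using finG by (simp add: prod.If_cases)
  qed
  finally show ?thesis using eq1 by simp
qed

lemma count_lt:
  assumes finX: "finite X" and c2: "2 \<le> card X"
  shows "card {U. U \<subseteq> X \<and> card U < k} \<le> card X ^ k"
proof (induction k)
  case 0 show ?case by simp
next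
  case (Suc k)
  have eq: "{U. U \<subseteq> X \<and> card U < Suc k} = {U. U \<subseteq> X \<and> card U < k} \<union> {U. U \<subseteq> X \<and> card U = k}" by auto
  have ck: "card X choose k \<le> card X ^ k"
  proof (cases "k \<le> card X")
    case True then show ?thesis by (rule binomial_le_pow)
  next
    case False then show ?thesis by (simp add: binomial_eq_0)
  qed
  have "card {U. U \<subseteq> X \<and> card U < Suc k} \<le> card {U. U \<subseteq> X \<and> card U < k} + card {U. U \<subseteq> X \<and> card U = k}"
    unfolding eq by (rule card_Un_le)
  also have "\<dots> \<le> card X ^ k + card X ^ k" using Suc.IH ck n_subsets[OF finX, of k] by simp
  also have "\<dots> \<le> card X ^ Suc k"
  proof -
    have "2 * card X ^ k \<le> card X * card X ^ k" using c2 by (rule mult_right_mono) simp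
    then show ?thesis by (metis mult_2 power_Suc)
  qed
  finally show ?case .
qed

lemma prob_exp:
  fixes D :: "(nat \<times> nat) set" and a p :: real
  assumes DG: "D \<subseteq> {0..<n} \<times> {0..<m}" and p: "0 \<le> p" "p \<le> 1"
  shows "measure_pmf.prob (bip_graph_pmf n m p) {E. real (card (E \<inter> D)) \<le> a}
           \<le> exp (a * ln 2 - p * card D / 2)"
proof -
  have "(1 - p / 2) ^ card D \<le> exp (- p / 2) ^ card D"
    using p by (intro power_mono) (auto simp: exp_ge_add_one_self[of "-p/2", simplified])
  also have "\<dots> = exp (- p * card D / 2)" by (simp add: exp_of_nat_mult[symmetric] mult.commute)
  finally have 1: "(1 - p / 2) ^ card D \<le> exp (- p * card D / 2)" .
  have "2 powr a = exp (a * ln 2)" by (simp add: powr_def)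
  then have "2 powr a * (1 - p / 2) ^ card D \<le> exp (a * ln 2) * exp (- p * card D / 2)"
    using 1 by (simp add: mult_left_mono)
  also have "\<dots> = exp (a * ln 2 - p * card D / 2)" by (simp add: exp_add[symmetric])
  finally show ?thesis using prob_few_edges[OF assms, of a] by linarith
qed

lemma ln2_34: "ln (2::real) \<le> 3/4"
  using ln2_le_25_over_36 by simp

lemma ub:
  "finite I \<Longrightarrow> measure_pmf.prob M (\<Union>i\<in>I. X i) \<le> (\<Sum>i\<in>I. measure_pmf.prob M (X i))"
  by (rule measure_pmf.finite_measure_subadditive_finite) auto

lemma ub3:
  assumes "finite I" "\<And>i. i \<in> I \<Longrightarrow> finite (J i)" "\<And>i j. i \<in> I \<Longrightarrow> j \<in> J i \<Longrightarrow> finite (K i j)"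
  shows "measure_pmf.prob M (\<Union>i\<in>I. \<Union>j\<in>J i. \<Union>k\<in>K i j. X i j k)
          \<le> (\<Sum>i\<in>I. \<Sum>j\<in>J i. \<Sum>k\<in>K i j. measure_pmf.prob M (X i j k))"
proof -
  have "measure_pmf.prob M (\<Union>i\<in>I. \<Union>j\<in>J i. \<Union>k\<in>K i j. X i j k)
        \<le> (\<Sum>i\<in>I. measure_pmf.prob M (\<Union>j\<in>J i. \<Union>k\<in>K i j. X i j k))"
    by (rule ub[OF assms(1)])
  also have "\<dots> \<le> (\<Sum>i\<in>I. \<Sum>j\<in>J i. measure_pmf.prob M (\<Union>k\<in>K i j. X i j k))"
    by (intro sum_mono ub assms(2))
  also have "\<dots> \<le> (\<Sum>i\<in>I. \<Sum>j\<in>J i. \<Sum>k\<in>K i j. measure_pmf.prob M (X i j k))"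
    by (intro sum_mono ub assms(3))
  finally show ?thesis .
qed

lemma real_pow_le: "c \<le> m ^ k \<Longrightarrow> real c \<le> real m ^ k"
  by (metis of_nat_le_iff of_nat_power)

lemma bad_bound:
  fixes r n :: nat and p :: real
  assumes r2: "r \<ge> 2" and n2: "n \<ge> 2" and p0: "0 \<le> p" and p1: "p \<le> 1"
    and pL: "p \<ge> 64 * ln (real (r * n)) / real n"
  shows "measure_pmf.prob (bip_graph_pmf n (r * n) p)
           {E. \<not> (\<forall>H. H \<subseteq> E \<and> max_degree_le {0..<n} {0..<r * n} H (16 * ln (real (r * n)))
                   \<longrightarrow> has_perfect_r_matching r {0..<n} {0..<r * n} (E - H))}
         \<le> 2 / real (r * n)"
proof -
  define m where "m = r * n"
  define L where "L = ln (real m)"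
  define A where "A = {0..<n}"
  define B where "B = {0..<m}"
  define M where "M = bip_graph_pmf n m p"
  define Bad where "Bad = {E. \<not> (\<forall>H. H \<subseteq> E \<and> max_degree_le A B H (16 * L)
                   \<longrightarrow> has_perfect_r_matching r A B (E - H))}"
  define Ev1 where "Ev1 S T = {E. real (card (E \<inter> S \<times> T)) \<le> 16 * L * card S}" for S T :: "nat set"
  define Ev2 where "Ev2 S T = {E. real (card (E \<inter> S \<times> T)) \<le> 16 * L * card T}" for S T :: "nat set"
  define I1 where "I1 = {s \<in> {1..n}. 2 * s \<le> n}"
  define SS where "SS s = {S. S \<subseteq> A \<and> card S = s}" for s
  define UU where "UU s = {U. U \<subseteq> B \<and> card U < r * s}" for s
  define TT where "TT t = {T. T \<subseteq> B \<and> card T = t}" for t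
  define VV where "VV t = {V. V \<subseteq> A \<and> card V < t \<and> 2 * card V < n}" for t
  define U1 where "U1 = (\<Union>s\<in>I1. \<Union>S\<in>SS s. \<Union>U\<in>UU s. Ev1 S (B - U))"
  define U2 where "U2 = (\<Union>t\<in>{1..m}. \<Union>T\<in>TT t. \<Union>V\<in>VV t. Ev2 (A - V) T)"
  have m4: "m \<ge> 4" unfolding m_def using r2 n2 mult_le_mono[OF r2 n2] by simp
  have nm: "n \<le> m" unfolding m_def using r2 by simp
  have Lpos: "L > 0" unfolding L_def using m4 by simp
  have expL: "exp L = real m" unfolding L_def using m4 by simp
  have pn: "p * n \<ge> 64 * L" using pL n2 unfolding L_def m_def by (simp add: field_simps)
  have finA: "finite A" and finB: "finite B" and cA: "card A = n" and cB: "card B = m"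
    unfolding A_def B_def by auto
  have ln2: "ln (2::real) \<le> 3/4" by (rule ln2_34)
  have powL: "real m ^ k = exp (real k * L)" for k by (simp add: exp_of_nat_mult expL)

  have cover: "Bad \<inter> set_pmf M \<subseteq> U1 \<union> U2"
  proof
    fix E assume EB: "E \<in> Bad \<inter> set_pmf M"
    have EAB: "E \<subseteq> A \<times> B" using EB unfolding M_def bip_graph_pmf_def A_def B_def by auto
    obtain H where H: "H \<subseteq> E" "max_degree_le A B H (16 * L)" "\<not> has_perfect_r_matching r A B (E - H)"
      using EB Bad_def by auto
    obtain S T where ST: "S \<subseteq> A" "T \<subseteq> B" "S \<noteq> {}" "card B < card T + r * card S"
      "real (card (E \<inter> S \<times> T)) \<le> 16 * L * card S" "real (card (E \<inter> S \<times> T)) \<le> 16 * L * card T"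
      using key[OF finA finB _ EAB H] cA cB m_def by auto
    have finS: "finite S" using ST(1) finA finite_subset by blast
    have finT: "finite T" using ST(2) finB finite_subset by blast
    have sn: "card S \<le> n" using card_mono[OF finA ST(1)] cA by simp
    have tm: "card T \<le> m" using card_mono[OF finB ST(2)] cB by simp
    show "E \<in> U1 \<union> U2"
    proof (cases "2 * card S \<le> n")
      case True
      have s1: "card S \<in> I1" unfolding I1_def using True sn ST(3) finS by (auto simp: card_gt_0_iff Suc_le_eq)
      have "card (B - T) = m - card T" using ST(2) finB cB by (simp add: card_Diff_subset finT)
      moreover have "m - card T < r * card S" using ST(4) cB tm by linarith
      ultimately have u: "B - T \<in> UU (card S)" unfolding UU_def by auto
      have bb: "B - (B - T) = T" using ST(2) by auto
      have ss: "S \<in> SS (card S)" unfolding SS_def using ST(1) by auto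
      have "E \<in> Ev1 S (B - (B - T))" unfolding Ev1_def bb using ST(5) by simp
      then have "E \<in> U1" unfolding U1_def by (intro UN_I[OF s1] UN_I[OF ss] UN_I[OF u])
      then show ?thesis by simp
    next
      case False
      have rs: "r * card S \<le> m" unfolding m_def using sn by simp
      have t1: "card T \<in> {1..m}" using ST(4) cB rs tm by auto
      have cV: "card (A - S) = n - card S" using ST(1) finA cA by (simp add: card_Diff_subset finS)
      have "r * (n - card S) = m - r * card S" unfolding m_def by (simp add: diff_mult_distrib2)
      then have "r * (n - card S) < card T" using ST(4) cB rs by linarith
      moreover have "n - card S \<le> r * (n - card S)" using r2 by simp
      ultimately have c1: "card (A - S) < card T" using cV by linarith
      have c2: "2 * card (A - S) < n" using cV False sn by linarith
      have v: "A - S \<in> VV (card T)" unfolding VV_def using c1 c2 by auto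
      have aa: "A - (A - S) = S" using ST(1) by auto
      have tt: "T \<in> TT (card T)" unfolding TT_def using ST(2) by auto
      have "E \<in> Ev2 (A - (A - S)) T" unfolding Ev2_def aa using ST(6) by simp
      then have "E \<in> U2" unfolding U2_def by (intro UN_I[OF t1] UN_I[OF tt] UN_I[OF v])
      then show ?thesis by simp
    qed
  qed

  have term1: "measure_pmf.prob M (Ev1 S (B - U)) \<le> exp (- (16 * real r - 12) * real s * L)"
    if s: "s \<in> I1" and S: "S \<in> SS s" and U: "U \<in> UU s" for s S U
  proof -
    define T where "T = B - U"
    have UB: "U \<subseteq> B" using U unfolding UU_def by auto
    have finU: "finite U" using finite_subset[OF UB finB] .
    have cT: "card T = m - card U" unfolding T_def using UB finU cB by (simp add: card_Diff_subset)
    have "2 * s \<le> n" using s I1_def by auto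
    then have "r * (2 * s) \<le> r * n" by (rule mult_le_mono2)
    then have rs2: "2 * (r * s) \<le> m" unfolding m_def by (simp add: mult.assoc mult.left_commute)
    have "card U < r * s" using U UU_def by auto
    then have t2: "m \<le> 2 * card T" using cT rs2 by linarith
    have DG: "S \<times> T \<subseteq> {0..<n} \<times> {0..<m}" using S SS_def A_def B_def T_def by auto
    have cS: "card S = s" using S SS_def by auto
    have cD: "card (S \<times> T) = s * card T" using cS by (simp add: card_cartesian_product)
    have "measure_pmf.prob M (Ev1 S (B - U)) \<le> exp (16 * L * s * ln 2 - p * real (s * card T) / 2)"
      using prob_exp[OF DG p0 p1, of "16 * L * s"] unfolding M_def Ev1_def T_def cS cD[unfolded T_def] by simp
    also have "\<dots> \<le> exp (- (16 * real r - 12) * real s * L)"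
    proof -
      have "16 * L * s * ln 2 \<le> 16 * L * s * (3/4)"
        using ln2 Lpos by (intro mult_left_mono) auto
      then have a: "16 * L * s * ln 2 \<le> 12 * L * s" by simp
      have t2r: "real m \<le> 2 * real (card T)" using of_nat_mono[OF t2, where 'a=real] by simp
      have "p * real m \<le> p * (2 * real (card T))" using t2r p0 by (rule mult_left_mono)
      moreover have "p * real m = r * (p * n)" unfolding m_def by simp
      moreover have "r * (p * n) \<ge> r * (64 * L)" using pn by (intro mult_left_mono) auto
      ultimately have "p * card T \<ge> 32 * L * r" by (simp add: algebra_simps)
      then have "real s * (p * card T) \<ge> real s * (32 * L * r)" by (intro mult_left_mono) auto
      then have b: "p * real (s * card T) / 2 \<ge> 16 * real r * real s * L" by (simp add: algebra_simps)
      show ?thesis using a b by (simp add: algebra_simps)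
    qed
    finally show ?thesis .
  qed

  have cnt1: "real (card (SS s)) * real (card (UU s)) * exp (- (16 * real r - 12) * real s * L) \<le> exp (- 2 * L)"
    if s: "s \<in> I1" for s
  proof -
    have s1: "s \<ge> 1" using s I1_def by auto
    have "card (SS s) = n choose s" unfolding SS_def using n_subsets[OF finA] cA by simp
    also have "\<dots> \<le> n ^ s" using s I1_def by (intro binomial_le_pow) auto
    also have "\<dots> \<le> m ^ s" using nm by (rule power_mono) simp
    finally have pw1: "card (SS s) \<le> m ^ s" .
    have c1: "real (card (SS s)) \<le> exp (real s * L)" using real_pow_le[OF pw1] powL[of s] by simp
    have pw2: "card (UU s) \<le> m ^ (r * s)" unfolding UU_def using count_lt[OF finB] cB m4 by simp
    have c2: "real (card (UU s)) \<le> exp (real (r * s) * L)" using real_pow_le[OF pw2] powL[of "r * s"] by simp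
    have "real (card (SS s)) * real (card (UU s)) * exp (- (16 * real r - 12) * real s * L)
        \<le> exp (real s * L) * exp (real (r * s) * L) * exp (- (16 * real r - 12) * real s * L)"
      using c1 c2 by (intro mult_right_mono mult_mono) auto
    also have "\<dots> = exp ((real s * (13 - 15 * real r)) * L)" by (simp add: exp_add[symmetric] algebra_simps)
    also have "\<dots> \<le> exp (- 2 * L)"
    proof -
      have "real s * (13 - 15 * real r) \<le> 1 * (13 - 15 * real r)"
        using s1 r2 by (intro mult_right_mono_neg) auto
      also have "\<dots> \<le> -2" using r2 by simp
      finally have h: "real s * (13 - 15 * real r) \<le> -2" .
      have "real s * (13 - 15 * real r) * L \<le> (-2) * L" using h Lpos by (intro mult_right_mono) auto
      then show ?thesis by simp
    qed
    finally show ?thesis .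
  qed

  have term2: "measure_pmf.prob M (Ev2 (A - V) T) \<le> exp (- 4 * real t * L)"
    if t: "t \<in> {1..m}" and T: "T \<in> TT t" and V: "V \<in> VV t" for t T V
  proof -
    define S where "S = A - V"
    have VA: "V \<subseteq> A" using V unfolding VV_def by auto
    have finV: "finite V" using finite_subset[OF VA finA] .
    have cS: "card S = n - card V" unfolding S_def using V VV_def finV cA by (simp add: card_Diff_subset)
    have s2: "n \<le> 2 * card S" using cS V VV_def by auto
    have DG: "S \<times> T \<subseteq> {0..<n} \<times> {0..<m}" using T TT_def A_def B_def S_def by auto
    have cT: "card T = t" using T TT_def by auto
    have cD: "card (S \<times> T) = card S * t" using cT by (simp add: card_cartesian_product)
    have "measure_pmf.prob M (Ev2 (A - V) T) \<le> exp (16 * L * t * ln 2 - p * real (card S * t) / 2)"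
      using prob_exp[OF DG p0 p1, of "16 * L * t"] unfolding M_def Ev2_def S_def cT cD[unfolded S_def] by simp
    also have "\<dots> \<le> exp (- 4 * real t * L)"
    proof -
      have "16 * L * t * ln 2 \<le> 16 * L * t * (3/4)"
        using ln2 Lpos by (intro mult_left_mono) auto
      then have a: "16 * L * t * ln 2 \<le> 12 * L * t" by simp
      have s2r: "real n \<le> 2 * real (card S)" using of_nat_mono[OF s2, where 'a=real] by simp
      have "p * real n \<le> p * (2 * real (card S))" using s2r p0 by (rule mult_left_mono)
      then have "p * card S \<ge> 32 * L" using pn by simp
      then have "real t * (p * card S) \<ge> real t * (32 * L)" by (intro mult_left_mono) auto
      then have b: "p * real (card S * t) / 2 \<ge> 16 * real t * L" by (simp add: algebra_simps)
      show ?thesis using a b by (simp add: algebra_simps)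
    qed
    finally show ?thesis .
  qed

  have cnt2: "real (card (TT t)) * real (card (VV t)) * exp (- 4 * real t * L) \<le> exp (- 2 * L)"
    if t: "t \<in> {1..m}" for t
  proof -
    have t1: "t \<ge> 1" using t by auto
    have "card (TT t) = m choose t" unfolding TT_def using n_subsets[OF finB] cB by simp
    also have "\<dots> \<le> m ^ t" using t by (intro binomial_le_pow) auto
    finally have pw3: "card (TT t) \<le> m ^ t" .
    have c1: "real (card (TT t)) \<le> exp (real t * L)" using real_pow_le[OF pw3] powL[of t] by simp
    have "card (VV t) \<le> card {V. V \<subseteq> A \<and> card V < t}"
      unfolding VV_def by (rule card_mono) (auto intro: finite_subset[of _ "Pow A"] simp: finA)
    also have "\<dots> \<le> n ^ t" using count_lt[OF finA] cA n2 by simp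
    also have "\<dots> \<le> m ^ t" using nm by (rule power_mono) simp
    finally have pw4: "card (VV t) \<le> m ^ t" .
    have c2: "real (card (VV t)) \<le> exp (real t * L)" using real_pow_le[OF pw4] powL[of t] by simp
    have "real (card (TT t)) * real (card (VV t)) * exp (- 4 * real t * L)
        \<le> exp (real t * L) * exp (real t * L) * exp (- 4 * real t * L)"
      using c1 c2 by (intro mult_right_mono mult_mono) auto
    also have "\<dots> = exp ((- 2 * real t) * L)" by (simp add: exp_add[symmetric] algebra_simps)
    also have "\<dots> \<le> exp (- 2 * L)" using t1 Lpos by (simp add: mult_right_mono)
    finally show ?thesis .
  qed

  have finSS: "finite (SS s)" for s unfolding SS_def by (rule finite_subset[of _ "Pow A"]) (auto simp: finA)
  have finUU: "finite (UU s)" for s unfolding UU_def by (rule finite_subset[of _ "Pow B"]) (auto simp: finB)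
  have finTT: "finite (TT s)" for s unfolding TT_def by (rule finite_subset[of _ "Pow B"]) (auto simp: finB)
  have finVV: "finite (VV s)" for s unfolding VV_def by (rule finite_subset[of _ "Pow A"]) (auto simp: finA)

  have P1: "measure_pmf.prob M U1 \<le> real n * exp (- 2 * L)"
  proof -
    have "measure_pmf.prob M U1 \<le> (\<Sum>s\<in>I1. \<Sum>S\<in>SS s. \<Sum>U\<in>UU s. measure_pmf.prob M (Ev1 S (B - U)))"
      unfolding U1_def by (rule ub3) (auto simp: I1_def finSS finUU)
    also have "\<dots> \<le> (\<Sum>s\<in>I1. \<Sum>S\<in>SS s. \<Sum>U\<in>UU s. exp (- (16 * real r - 12) * real s * L))"
      by (intro sum_mono term1)
    also have "\<dots> = (\<Sum>s\<in>I1. real (card (SS s)) * real (card (UU s)) * exp (- (16 * real r - 12) * real s * L))"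
      by (simp add: mult.assoc)
    also have "\<dots> \<le> (\<Sum>s\<in>I1. exp (- 2 * L))" by (intro sum_mono cnt1)
    also have "\<dots> = real (card I1) * exp (- 2 * L)" by simp
    also have "\<dots> \<le> real n * exp (- 2 * L)"
    proof -
      have "card I1 \<le> card {1..n}" unfolding I1_def by (rule card_mono) auto
      then show ?thesis by (intro mult_right_mono) auto
    qed
    finally show ?thesis .
  qed

  have P2: "measure_pmf.prob M U2 \<le> real m * exp (- 2 * L)"
  proof -
    have "measure_pmf.prob M U2 \<le> (\<Sum>t\<in>{1..m}. \<Sum>T\<in>TT t. \<Sum>V\<in>VV t. measure_pmf.prob M (Ev2 (A - V) T))"
      unfolding U2_def by (rule ub3) (auto simp: finTT finVV)
    also have "\<dots> \<le> (\<Sum>t\<in>{1..m}. \<Sum>T\<in>TT t. \<Sum>V\<in>VV t. exp (- 4 * real t * L))"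
      by (intro sum_mono term2)
    also have "\<dots> = (\<Sum>t\<in>{1..m}. real (card (TT t)) * real (card (VV t)) * exp (- 4 * real t * L))"
      by (simp add: mult.assoc)
    also have "\<dots> \<le> (\<Sum>t\<in>{1..m}. exp (- 2 * L))" by (intro sum_mono cnt2)
    also have "\<dots> = real m * exp (- 2 * L)" by simp
    finally show ?thesis .
  qed

  have "measure_pmf.prob M Bad = measure_pmf.prob M (Bad \<inter> set_pmf M)"
    by (simp add: measure_Int_set_pmf)
  also have "\<dots> \<le> measure_pmf.prob M (U1 \<union> U2)"
    using cover by (intro measure_pmf.finite_measure_mono) auto
  also have "\<dots> \<le> measure_pmf.prob M U1 + measure_pmf.prob M U2"
    by (rule measure_Un_le) auto
  also have "\<dots> \<le> (real n + real m) * exp (- 2 * L)" using P1 P2 by (simp add: algebra_simps)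
  also have "\<dots> \<le> 2 / real m"
  proof -
    have e: "exp (- 2 * L) = 1 / (real m * real m)"
    proof -
      have "exp (- 2 * L) * (exp L * exp L) = 1" by (simp add: exp_add[symmetric])
      then show ?thesis using expL m4 by (simp add: field_simps)
    qed
    have "(real n + real m) \<le> 2 * real m" using nm by simp
    then have "(real n + real m) * exp (- 2 * L) \<le> 2 * real m * exp (- 2 * L)" by (intro mult_right_mono) auto
    also have "\<dots> = 2 / real m" unfolding e using m4 by (simp add: field_simps)
    finally show ?thesis .
  qed
  finally show ?thesis unfolding M_def Bad_def A_def B_def L_def m_def .
qed

theorem lemma4:
  fixes r :: nat and p :: "nat \<Rightarrow> real"
  assumes "r \<ge> 2"
    and "\<And>n. 0 \<le> p n \<and> p n \<le> 1"
    and "eventually (\<lambda>n. p n \<ge> 64 * ln (real (r * n)) / real n) sequentially"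
  shows "(\<lambda>n. measure_pmf.prob (bip_graph_pmf n (r * n) (p n))
            {E. \<forall>H. H \<subseteq> E \<and> max_degree_le {0..<n} {0..<r * n} H (16 * ln (real (r * n)))
                   \<longrightarrow> has_perfect_r_matching r {0..<n} {0..<r * n} (E - H)})
         \<longlonglongrightarrow> 1"
proof -
  define G where "G n = {E. \<forall>H. H \<subseteq> E \<and> max_degree_le {0..<n} {0..<r * n} H (16 * ln (real (r * n)))
                   \<longrightarrow> has_perfect_r_matching r {0..<n} {0..<r * n} (E - H)}" for n
  have low: "eventually (\<lambda>n. 1 - 2 / real (r * n) \<le> measure_pmf.prob (bip_graph_pmf n (r * n) (p n)) (G n)) sequentially"
  proof -
    have "eventually (\<lambda>n. n \<ge> 2 \<and> p n \<ge> 64 * ln (real (r * n)) / real n) sequentially"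
      using assms(3) eventually_ge_at_top[of 2] by eventually_elim auto
    then show ?thesis
    proof eventually_elim
      case (elim n)
      have "measure_pmf.prob (bip_graph_pmf n (r * n) (p n)) (UNIV - G n)
            = measure_pmf.prob (bip_graph_pmf n (r * n) (p n))
           {E. \<not> (\<forall>H. H \<subseteq> E \<and> max_degree_le {0..<n} {0..<r * n} H (16 * ln (real (r * n)))
                   \<longrightarrow> has_perfect_r_matching r {0..<n} {0..<r * n} (E - H))}"
        unfolding G_def by (rule arg_cong[where f="measure_pmf.prob _"]) auto
      also have "\<dots> \<le> 2 / real (r * n)"
        using bad_bound[OF assms(1), of n "p n"] elim assms(2)[of n] by auto
      finally have "measure_pmf.prob (bip_graph_pmf n (r * n) (p n)) (UNIV - G n) \<le> 2 / real (r * n)" .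
      moreover have "measure_pmf.prob (bip_graph_pmf n (r * n) (p n)) (UNIV - G n)
          = 1 - measure_pmf.prob (bip_graph_pmf n (r * n) (p n)) (G n)"
        using measure_pmf.prob_compl[of "G n" "bip_graph_pmf n (r * n) (p n)"] by simp
      ultimately show ?case by simp
    qed
  qed
  have up: "eventually (\<lambda>n. measure_pmf.prob (bip_graph_pmf n (r * n) (p n)) (G n) \<le> 1) sequentially"
    by (simp add: measure_pmf.prob_le_1)
  have eq: "2 / real (r * n) = (2 / real r) * (1 / real n)" for n by simp
  have "(\<lambda>n. (2 / real r) * (1 / real n)) \<longlonglongrightarrow> (2 / real r) * 0"
    by (intro tendsto_mult tendsto_const lim_inverse_n')
  then have "(\<lambda>n. 2 / real (r * n)) \<longlonglongrightarrow> 0" unfolding eq by simp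
  then have lim: "(\<lambda>n. 1 - 2 / real (r * n)) \<longlonglongrightarrow> 1 - 0" by (intro tendsto_diff tendsto_const)
  have "(\<lambda>n. measure_pmf.prob (bip_graph_pmf n (r * n) (p n)) (G n)) \<longlonglongrightarrow> 1"
    by (rule tendsto_sandwich[OF low up]) (use lim in auto)
  then show ?thesis unfolding G_def .
qed

end
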